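(* For all integers $N\ge 2$ and $1\le k\le N-1$, $$\mathbb{E}[\mathcal{N}_k(N)]=\frac{N}{k(k+1)},$$ while $\mathcal{N}_N(N)=1$ (the vertex $v_1$ is the unique vertex of degree $N$).
   Context: A random recursive hypergraph (RRH) is the random hypergraph process defined as follows. At size $N=1$ it has vertex set $\{v_1\}$ and edge set $\{\{v_1\}\}$. Given the hypergraph of size $N$ (vertices $v_1,\dots,v_N$, exactly $N$ edges), one chooses an existing edge $e$ uniformly at random, independently of the past, and adds a new vertex $v_{N+1}$ together with the new edge $e\cup\{v_{N+1}\}$. The degree of a vertex is the number of edges containing it. $\mathcal{N}_k(N)$ denotes the number of vertices of degree $k$ in the RRH of size $N$. *)

theory Defs
  imports "HOL-Probability.Probability"
begin

text \<open>A hypergraph of size N is represented by the list of its N edges (in order of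
creation); its vertices are v_1,...,v_N, encoded as the natural numbers 1..N.\<close>

type_synonym hypergraph = "nat set list"

text \<open>Size 0 is junk.\<close>
fun rrh :: "nat \<Rightarrow> hypergraph pmf" where
  "rrh 0 = return_pmf []"
| "rrh (Suc 0) = return_pmf [{1}]"
| "rrh (Suc (Suc n)) =
     bind_pmf (rrh (Suc n)) (\<lambda>H.
       bind_pmf (pmf_of_set {..<length H}) (\<lambda>i.
         return_pmf (H @ [H ! i \<union> {Suc (Suc n)}])))"

definition degree :: "hypergraph \<Rightarrow> nat \<Rightarrow> nat" where
  "degree H v = card {i. i < length H \<and> v \<in> H ! i}"

definition numDeg :: "nat \<Rightarrow> hypergraph \<Rightarrow> nat" where
  "numDeg k H = card {v \<in> {1..length H}. degree H v = k}"

end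

theory Submission
  imports Defs
begin

definition inv :: "nat \<Rightarrow> hypergraph \<Rightarrow> bool" where
  "inv N H \<longleftrightarrow> length H = N \<and> (\<forall>i<N. H!i \<subseteq> {1..N} \<and> 1 \<in> H!i) \<and> H!0 = {1}"

lemma set_rrh_SS:
  "set_pmf (rrh (Suc (Suc n))) = (\<Union>H\<in>set_pmf (rrh (Suc n)).
     (\<lambda>i. H @ [H!i \<union> {Suc (Suc n)}]) ` set_pmf (pmf_of_set {..<length H}))"
  by (auto simp: set_bind_pmf)

lemma inv_rrh: "H \<in> set_pmf (rrh (Suc n)) \<Longrightarrow> inv (Suc n) H"
proof (induction n arbitrary: H)
  case 0
  then show ?case by (auto simp: inv_def)
next
  case (Suc n)
  from Suc.prems obtain G i where G: "G \<in> set_pmf (rrh (Suc n))"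
    and i: "i \<in> set_pmf (pmf_of_set {..<length G})" and H: "H = G @ [G!i \<union> {Suc (Suc n)}]"
    unfolding set_rrh_SS by blast
  have iG: "inv (Suc n) G" using Suc.IH G by blast
  then have lG: "length G = Suc n" by (simp add: inv_def)
  have "i < Suc n" using i lG by (subst (asm) set_pmf_of_set) auto
  have a: "\<forall>j<Suc n. G!j \<subseteq> {1..Suc n} \<and> 1 \<in> G!j" and b: "G!0 = {1}"
    using iG by (auto simp: inv_def)
  have "\<forall>j<Suc (Suc n). H!j \<subseteq> {1..Suc (Suc n)} \<and> 1 \<in> H!j"
  proof (intro allI impI)
    fix j assume j: "j < Suc (Suc n)"
    show "H!j \<subseteq> {1..Suc (Suc n)} \<and> 1 \<in> H!j"
    proof (cases "j < Suc n")
      case True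
      then have "H!j = G!j" unfolding H using lG by (simp add: nth_append)
      moreover have "G!j \<subseteq> {1..Suc n}" "1 \<in> G!j" using a True by blast+
      ultimately show ?thesis by auto
    next
      case False
      then have "H!j = G!i \<union> {Suc (Suc n)}" unfolding H using lG j by (simp add: nth_append)
      moreover have "G!i \<subseteq> {1..Suc n}" "1 \<in> G!i" using a \<open>i < Suc n\<close> by blast+
      ultimately show ?thesis by auto
    qed
  qed
  moreover have "H!0 = {1}" unfolding H using lG b by (simp add: nth_append)
  moreover have "length H = Suc (Suc n)" unfolding H using lG by simp
  ultimately show ?case unfolding inv_def by blast
qed

lemma finite_rrh: "finite (set_pmf (rrh (Suc n)))"
proof (induction n)
  case 0
  then show ?case by simp
next
  case (Suc n)
  have "\<And>H. H \<in> set_pmf (rrh (Suc n)) \<Longrightarrow> finite (set_pmf (pmf_of_set {..<length H}))"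
  proof -
    fix H assume "H \<in> set_pmf (rrh (Suc n))"
    then have "length H = Suc n" using inv_rrh by (simp add: inv_def)
    then show "finite (set_pmf (pmf_of_set {..<length H}))" by (subst set_pmf_of_set) auto
  qed
  then show ?case unfolding set_rrh_SS using Suc by auto
qed

lemma exp_bind:
  fixes f :: "'b \<Rightarrow> real"
  assumes fin: "finite (set_pmf M)" and finK: "\<And>x. x \<in> set_pmf M \<Longrightarrow> finite (set_pmf (K x))"
    and nn: "\<And>y. f y \<ge> 0"
  shows "measure_pmf.expectation (bind_pmf M K) f =
         measure_pmf.expectation M (\<lambda>x. measure_pmf.expectation (K x) f)"
proof -
  have nn2: "\<And>x. 0 \<le> measure_pmf.expectation (K x) f"
    by (intro integral_nonneg_AE) (simp add: nn)
  have "measure_pmf.expectation (bind_pmf M K) f = enn2real (\<integral>\<^sup>+y. ennreal (f y) \<partial>bind_pmf M K)"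
    by (rule integral_eq_nn_integral) (auto simp: nn)
  also have "(\<integral>\<^sup>+y. ennreal (f y) \<partial>bind_pmf M K) = (\<integral>\<^sup>+x. \<integral>\<^sup>+y. ennreal (f y) \<partial>K x \<partial>M)"
    by simp
  also have "\<dots> = (\<integral>\<^sup>+x. ennreal (measure_pmf.expectation (K x) f) \<partial>M)"
  proof (rule nn_integral_cong_AE)
    show "AE x in M. (\<integral>\<^sup>+y. ennreal (f y) \<partial>K x) = ennreal (measure_pmf.expectation (K x) f)"
      unfolding AE_measure_pmf_iff
      by (auto intro!: nn_integral_eq_integral integrable_measure_pmf_finite finK simp: nn)
  qed
  also have "\<dots> = ennreal (measure_pmf.expectation M (\<lambda>x. measure_pmf.expectation (K x) f))"
    by (auto intro!: nn_integral_eq_integral integrable_measure_pmf_finite fin nn2 AE_I2)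
  finally show ?thesis
    by (simp add: integral_nonneg nn)
qed

lemma degree_snoc: "degree (H @ [e]) v = degree H v + (if v \<in> e then 1 else 0)"
proof -
  have "{j. j < length (H @ [e]) \<and> v \<in> (H@[e])!j} =
        {j. j < length H \<and> v \<in> H!j} \<union> {j. j = length H \<and> v \<in> e}"
    by (auto simp: nth_append less_Suc_eq)
  moreover have "card ({j. j < length H \<and> v \<in> H!j} \<union> {j. j = length H \<and> v \<in> e}) =
      card {j. j < length H \<and> v \<in> H!j} + card {j. j = length H \<and> v \<in> e}"
    by (rule card_Un_disjoint) auto
  moreover have "card {j. j = length H \<and> v \<in> e} = (if v \<in> e then 1 else 0)" by auto
  ultimately show ?thesis unfolding degree_def by simp
qed

lemma degree_le: "degree H v \<le> length H"
proof -
  have "{i. i < length H \<and> v \<in> H ! i} \<subseteq> {..<length H}" by auto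
  then show ?thesis unfolding degree_def by (metis card_lessThan card_mono finite_lessThan)
qed

lemma numDeg_sum: "real (numDeg k H) = (\<Sum>v\<in>{1..length H}. if degree H v = k then 1 else 0)"
proof -
  have "real (numDeg k H) = (\<Sum>v\<in>{v \<in> {1..length H}. degree H v = k}. 1)"
    unfolding numDeg_def by simp
  also have "\<dots> = (\<Sum>v\<in>{1..length H}. if degree H v = k then 1 else 0)"
    by (rule sum.inter_filter) simp
  finally show ?thesis .
qed

lemma inner_sum:
  fixes H :: hypergraph
  assumes lH: "length H = N" and k: "k \<ge> 1"
  shows "(\<Sum>i<N. if degree H v + (if v \<in> H!i then 1 else 0) = k then 1 else (0::real)) =
     (if degree H v = k - 1 then real (k-1) else 0) + (if degree H v = k then real N - real k else 0)"
proof -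
  let ?d = "degree H v"
  let ?P = "{i. v \<in> H!i}"
  have "(\<Sum>i<N. if ?d + (if v \<in> H!i then 1 else 0) = k then 1 else (0::real)) =
        (\<Sum>i<N. if v \<in> H!i then (if ?d + 1 = k then 1 else 0) else (if ?d = k then 1 else (0::real)))"
    by (rule sum.cong) auto
  also have "\<dots> = (\<Sum>i\<in>{..<N} \<inter> ?P. (if ?d + 1 = k then 1 else 0)) +
                    (\<Sum>i\<in>{..<N} \<inter> - ?P. (if ?d = k then 1 else (0::real)))"
    by (rule sum.If_cases) simp
  also have "\<dots> = real (card ({..<N} \<inter> ?P)) * (if ?d + 1 = k then 1 else 0) +
                    real (card ({..<N} \<inter> - ?P)) * (if ?d = k then 1 else 0)"
    by simp
  also have c1: "card ({..<N} \<inter> ?P) = ?d"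
  proof -
    have "{..<N} \<inter> ?P = {i. i < length H \<and> v \<in> H ! i}" using lH by auto
    then show ?thesis by (simp add: degree_def)
  qed
  also have "card ({..<N} \<inter> - ?P) = N - ?d"
  proof -
    have "{..<N} \<inter> - ?P = {..<N} - ({..<N} \<inter> ?P)" by auto
    then have "card ({..<N} \<inter> - ?P) = card {..<N} - card ({..<N} \<inter> ?P)"
      by (simp add: card_Diff_subset)
    then show ?thesis using c1 by simp
  qed
  finally have eq: "(\<Sum>i<N. if ?d + (if v \<in> H!i then 1 else 0) = k then 1 else (0::real)) =
     real ?d * (if ?d + 1 = k then 1 else 0) + real (N - ?d) * (if ?d = k then 1 else 0)" .
  have dle: "?d \<le> N" using degree_le[of H v] lH by simp
  have "real ?d * (if ?d + 1 = k then 1 else 0) + real (N - ?d) * (if ?d = k then 1 else 0) =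
     (if ?d = k - 1 then real (k-1) else 0) + (if ?d = k then real N - real k else (0::real))"
  proof (cases "?d = k")
    case True
    then show ?thesis using k dle by (simp add: of_nat_diff)
  next
    case False
    show ?thesis
    proof (cases "?d + 1 = k")
      case True
      then have "?d = k - 1" by simp
      then show ?thesis using True False by simp
    next
      case F2: False
      then have "?d \<noteq> k - 1" using k by simp
      then show ?thesis using F2 False by simp
    qed
  qed
  then show ?thesis by (rule trans[OF eq])
qed

lemma step_sum:
  fixes H :: hypergraph
  assumes iH: "inv N H" and k: "k \<ge> 1"
  shows "(\<Sum>i<N. real (numDeg k (H @ [H!i \<union> {Suc N}]))) =
     (real N - real k) * real (numDeg k H) + real (k-1) * real (numDeg (k-1) H)
     + (if k = 1 then real N else 0)"
proof -
  have lH: "length H = N" and sub: "\<And>j. j < N \<Longrightarrow> H!j \<subseteq> {1..N}"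
    using iH by (auto simp: inv_def)
  let ?d = "degree H"
  have new0: "?d (Suc N) = 0"
  proof -
    have "{j. j < length H \<and> Suc N \<in> H!j} = {}" using sub lH by fastforce
    then show ?thesis by (simp add: degree_def)
  qed
  have per_i: "real (numDeg k (H @ [H!i \<union> {Suc N}])) =
     (\<Sum>v\<in>{1..N}. if ?d v + (if v \<in> H!i then 1 else 0) = k then 1 else 0) + (if k = 1 then 1 else 0)"
    if i: "i < N" for i
  proof -
    have "real (numDeg k (H @ [H!i \<union> {Suc N}])) =
      (\<Sum>v\<in>{1..Suc N}. if degree (H @ [H!i \<union> {Suc N}]) v = k then 1 else 0)"
      using lH by (simp add: numDeg_sum)
    also have "{1..Suc N} = insert (Suc N) {1..N}" by auto
    also have "(\<Sum>v\<in>insert (Suc N) {1..N}. if degree (H @ [H!i \<union> {Suc N}]) v = k then 1 else (0::real))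
       = (if degree (H @ [H!i \<union> {Suc N}]) (Suc N) = k then 1 else 0) +
         (\<Sum>v\<in>{1..N}. if degree (H @ [H!i \<union> {Suc N}]) v = k then 1 else 0)"
      by (simp add: sum.insert)
    also have "(\<Sum>v\<in>{1..N}. if degree (H @ [H!i \<union> {Suc N}]) v = k then 1 else (0::real)) =
       (\<Sum>v\<in>{1..N}. if ?d v + (if v \<in> H!i then 1 else 0) = k then 1 else 0)"
      by (rule sum.cong) (auto simp: degree_snoc)
    also have "degree (H @ [H!i \<union> {Suc N}]) (Suc N) = 1"
      by (simp add: degree_snoc new0)
    finally show ?thesis by (cases "k = 1") simp_all
  qed
  have "(\<Sum>i<N. real (numDeg k (H @ [H!i \<union> {Suc N}]))) =
     (\<Sum>i<N. (\<Sum>v\<in>{1..N}. if ?d v + (if v \<in> H!i then 1 else 0) = k then 1 else 0) + (if k = 1 then 1 else (0::real)))"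
    by (rule sum.cong[OF refl], rule per_i) simp
  also have "\<dots> = (\<Sum>i<N. \<Sum>v\<in>{1..N}. if ?d v + (if v \<in> H!i then 1 else 0) = k then 1 else (0::real))
      + (\<Sum>i<N. if k = 1 then 1 else (0::real))"
    by (rule sum.distrib)
  also have "(\<Sum>i<N. \<Sum>v\<in>{1..N}. if ?d v + (if v \<in> H!i then 1 else 0) = k then 1 else (0::real)) =
     (\<Sum>v\<in>{1..N}. \<Sum>i<N. if ?d v + (if v \<in> H!i then 1 else 0) = k then 1 else (0::real))"
    by (rule sum.swap)
  also have "(\<Sum>i<N. if k = 1 then 1 else (0::real)) = (if k = 1 then real N else 0)" by simp
  also have "(\<Sum>v\<in>{1..N}. \<Sum>i<N. if ?d v + (if v \<in> H!i then 1 else 0) = k then 1 else (0::real)) =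
     (\<Sum>v\<in>{1..N}. (if ?d v = k - 1 then real (k-1) else 0) + (if ?d v = k then real N - real k else 0))"
    by (rule sum.cong) (simp_all add: inner_sum[OF lH k])
  also have "\<dots> = (\<Sum>v\<in>{1..N}. (if ?d v = k - 1 then real (k-1) else 0)) +
       (\<Sum>v\<in>{1..N}. (if ?d v = k then real N - real k else 0))"
    by (rule sum.distrib)
  also have "(\<Sum>v\<in>{1..N}. (if ?d v = k - 1 then real (k-1) else 0)) = real (k-1) * real (numDeg (k-1) H)"
    unfolding numDeg_sum lH by (subst sum_distrib_left) (rule sum.cong, simp_all)
  also have "(\<Sum>v\<in>{1..N}. (if ?d v = k then real N - real k else 0)) = (real N - real k) * real (numDeg k H)"
    unfolding numDeg_sum lH by (subst sum_distrib_left) (rule sum.cong, simp_all)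
  finally show ?thesis by (simp add: algebra_simps)
qed

lemma aux1:
  fixes x n :: real
  assumes "x \<ge> 2" "n > 0"
  shows "((n - x) * (n / (x * (x + 1))) + (x - 1) * (n / ((x - 1) * x)) + 0) / n = (n + 1) / (x * (x + 1))"
proof -
  have d: "x * (x + 1) \<noteq> 0" "x + x * x \<noteq> 0" "x \<noteq> 0" using assms by (auto simp: add_pos_pos) (smt (verit) mult_nonneg_nonneg)
  have a: "(x - 1) * (n / ((x - 1) * x)) = n / x" using assms by (simp add: field_simps)
  have "(n - x) * (n / (x * (x + 1))) + n / x = n * (n + 1) / (x * (x + 1))"
    using d by (simp add: divide_simps) (simp add: algebra_simps)
  then show ?thesis using a assms by simp
qed
lemma aux2:
  fixes x :: real
  assumes "x \<ge> 2"
  shows "((x - x) * 1 + (x - 1) * (x / ((x - 1) * x)) + 0) / x = 1 / x"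
proof -
  have h: "x - 1 \<noteq> 0" "x \<noteq> 0" "x + 1 \<noteq> 0" using assms by auto
  show ?thesis using h by simp
qed

definition F :: "nat \<Rightarrow> nat \<Rightarrow> real" where
  "F n k = (if k < n then real n / (real k * (real k + 1)) else if k = n then 1 else 0)"

lemma F_rec:
  assumes N: "N \<ge> 1" and k: "k \<ge> 1"
  shows "((real N - real k) * F N k + real (k-1) * F N (k-1) + (if k = 1 then real N else 0)) / real N
         = F (Suc N) k"
proof (cases "k = 1")
  case True
  show ?thesis
  proof (cases "N = 1")
    case True
    then show ?thesis using \<open>k = 1\<close> by (simp add: F_def)
  next
    case False
    then have "1 < N" using N by simp
    then show ?thesis using \<open>k = 1\<close> N by (simp add: F_def field_simps)
  qed
next
  case False
  then have k2: "k \<ge> 2" using k by simp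
  have Np: "real N > 0" using N by simp
  consider "k < N" | "k = N" | "k = Suc N" | "k > Suc N" by linarith
  then show ?thesis
  proof cases
    case 1
    then have "k - 1 < N" by simp
    have e1: "F N k = real N / (real k * (real k + 1))" using 1 by (simp add: F_def)
    have e2: "F N (k-1) = real N / ((real k - 1) * real k)" using \<open>k - 1 < N\<close> k2
      by (simp add: F_def of_nat_diff)
    have e3: "F (Suc N) k = (real N + 1) / (real k * (real k + 1))" using 1 by (simp add: F_def)
    have rk: "real (k-1) = real k - 1" using k2 by (simp add: of_nat_diff)
    have p1: "real k - 1 \<noteq> 0" "real k \<noteq> 0" "real k + 1 \<noteq> 0" using k2 by simp_all
    show ?thesis unfolding e1 e2 e3 rk using False aux1[of "real k" "real N"] k2 Np by simp
  next
    case 2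
    then have "k - 1 < N" using k2 by simp
    have e1: "F N k = 1" using 2 by (simp add: F_def)
    have e2: "F N (k-1) = real N / ((real N - 1) * real N)" using \<open>k - 1 < N\<close> k2 2
      by (simp add: F_def of_nat_diff)
    have e3: "F (Suc N) k = 1 / real N"
    proof -
      have nz: "real N + 1 \<noteq> 0" "real N \<noteq> 0" using Np by auto
      have "(1 + real N) / (real N * (real N + 1)) = (real N + 1) / (real N * (real N + 1))"
        by (simp add: add.commute)
      also have "\<dots> = 1 / real N" using nz by simp
      finally have "(1 + real N) / (real N * (real N + 1)) = 1 / real N" .
      then show ?thesis using 2 by (simp add: F_def)
    qed
    have rk: "real (k-1) = real N - 1" using k2 2 by (simp add: of_nat_diff)
    show ?thesis unfolding e1 e2 e3 rk using False aux2[of "real N"] k2 2 by simp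
  next
    case 3
    then show ?thesis using k2 Np by (simp add: F_def)
  next
    case 4
    then show ?thesis using k2 Np by (simp add: F_def)
  qed
qed

lemma inner_exp:
  assumes "H \<in> set_pmf (rrh (Suc n))" and k: "k \<ge> 1"
  shows "measure_pmf.expectation
           (bind_pmf (pmf_of_set {..<length H}) (\<lambda>i. return_pmf (H @ [H ! i \<union> {Suc (Suc n)}])))
           (\<lambda>H. real (numDeg k H)) =
         ((real (Suc n) - real k) * real (numDeg k H) + real (k-1) * real (numDeg (k-1) H)
          + (if k = 1 then real (Suc n) else 0)) / real (Suc n)"
proof -
  have iH: "inv (Suc n) H" using inv_rrh assms by blast
  then have lH: "length H = Suc n" by (simp add: inv_def)
  have "bind_pmf (pmf_of_set {..<length H}) (\<lambda>i. return_pmf (H @ [H ! i \<union> {Suc (Suc n)}])) =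
        map_pmf (\<lambda>i. H @ [H ! i \<union> {Suc (Suc n)}]) (pmf_of_set {..<Suc n})"
    by (simp add: map_pmf_def lH)
  then have "measure_pmf.expectation
           (bind_pmf (pmf_of_set {..<length H}) (\<lambda>i. return_pmf (H @ [H ! i \<union> {Suc (Suc n)}])))
           (\<lambda>H. real (numDeg k H)) =
        measure_pmf.expectation (pmf_of_set {..<Suc n}) (\<lambda>i. real (numDeg k (H @ [H ! i \<union> {Suc (Suc n)}])))"
    by simp
  also have "\<dots> = (\<Sum>i<Suc n. real (numDeg k (H @ [H ! i \<union> {Suc (Suc n)}]))) / real (Suc n)"
    by (subst integral_pmf_of_set) auto
  also have "\<dots> = ((real (Suc n) - real k) * real (numDeg k H) + real (k-1) * real (numDeg (k-1) H)
          + (if k = 1 then real (Suc n) else 0)) / real (Suc n)"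
    using step_sum[OF iH k] by simp
  finally show ?thesis .
qed

lemma exp_rrh:
  "k \<ge> 1 \<Longrightarrow> measure_pmf.expectation (rrh (Suc n)) (\<lambda>H. real (numDeg k H)) = F (Suc n) k"
proof (induction n arbitrary: k)
  case 0
  have d: "degree [{1}] 1 = 1"
  proof -
    have e: "{i. i < length [{1::nat}] \<and> 1 \<in> [{1::nat}] ! i} = {0}" by auto
    show ?thesis unfolding degree_def by (subst e) simp
  qed
  have "numDeg k [{1}] = (if k = 1 then 1 else 0)"
  proof -
    have "{v \<in> {1..length [{1::nat}]}. degree [{1}] v = k} = (if k = 1 then {1} else {})"
      using d by auto
    then show ?thesis by (simp add: numDeg_def)
  qed
  then show ?case
    by (simp add: integral_measure_pmf_real[of "{[{1}]}"] F_def)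
next
  case (Suc n)
  let ?M = "rrh (Suc n)"
  let ?K = "\<lambda>H. bind_pmf (pmf_of_set {..<length H}) (\<lambda>i. return_pmf (H @ [H ! i \<union> {Suc (Suc n)}]))"
  have finK: "finite (set_pmf (?K H))" if "H \<in> set_pmf ?M" for H
  proof -
    have "length H = Suc n" using inv_rrh that by (simp add: inv_def)
    then have "set_pmf (pmf_of_set {..<length H}) = {..<Suc n}" by (subst set_pmf_of_set) auto
    then show ?thesis by (simp add: set_bind_pmf)
  qed
  have "measure_pmf.expectation (rrh (Suc (Suc n))) (\<lambda>H. real (numDeg k H)) =
        measure_pmf.expectation ?M (\<lambda>H. measure_pmf.expectation (?K H) (\<lambda>H. real (numDeg k H)))"
    by (simp only: rrh.simps) (rule exp_bind[OF finite_rrh finK], auto)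
  also have "\<dots> = measure_pmf.expectation ?M (\<lambda>H.
       ((real (Suc n) - real k) * real (numDeg k H) + real (k-1) * real (numDeg (k-1) H)
          + (if k = 1 then real (Suc n) else 0)) / real (Suc n))"
  proof (rule integral_cong_AE)
    show "AE H in measure_pmf ?M. measure_pmf.expectation (?K H) (\<lambda>H. real (numDeg k H)) =
       ((real (Suc n) - real k) * real (numDeg k H) + real (k-1) * real (numDeg (k-1) H)
          + (if k = 1 then real (Suc n) else 0)) / real (Suc n)"
      unfolding AE_measure_pmf_iff by (intro ballI inner_exp[OF _ Suc.prems])
  qed simp_all
  also have "\<dots> = ((real (Suc n) - real k) * measure_pmf.expectation ?M (\<lambda>H. real (numDeg k H))
      + real (k-1) * measure_pmf.expectation ?M (\<lambda>H. real (numDeg (k-1) H))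
          + (if k = 1 then real (Suc n) else 0)) / real (Suc n)"
    by (simp add: integrable_measure_pmf_finite[OF finite_rrh])
  also have "real (k-1) * measure_pmf.expectation ?M (\<lambda>H. real (numDeg (k-1) H)) =
             real (k-1) * F (Suc n) (k-1)"
    using Suc.IH[of "k-1"] Suc.prems by (cases "k = 1") auto
  also have "measure_pmf.expectation ?M (\<lambda>H. real (numDeg k H)) = F (Suc n) k"
    using Suc.IH Suc.prems by blast
  also have "((real (Suc n) - real k) * F (Suc n) k + real (k-1) * F (Suc n) (k-1)
          + (if k = 1 then real (Suc n) else 0)) / real (Suc n) = F (Suc (Suc n)) k"
    by (rule F_rec) (use Suc.prems in auto)
  finally show ?case .
qed

lemma second_part:
  assumes "N \<ge> 1" "H \<in> set_pmf (rrh N)"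
  shows "numDeg N H = 1 \<and> degree H 1 = N"
proof -
  obtain n where n: "N = Suc n" using assms(1) by (cases N) auto
  have iH: "inv N H" using inv_rrh assms(2) n by blast
  then have lH: "length H = N" and a: "\<forall>i<N. H!i \<subseteq> {1..N} \<and> 1 \<in> H!i" and b: "H!0 = {1}"
    by (auto simp: inv_def)
  have d1: "degree H 1 = N"
  proof -
    have "{i. i < length H \<and> 1 \<in> H ! i} = {..<N}" using a lH by auto
    then show ?thesis by (simp add: degree_def)
  qed
  have dv: "degree H v < N" if "v \<noteq> 1" for v
  proof -
    have "{i. i < length H \<and> v \<in> H ! i} \<subseteq> {1..<N}"
    proof
      fix i assume i: "i \<in> {i. i < length H \<and> v \<in> H ! i}"
      have "i \<noteq> 0"
      proof
        assume "i = 0"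
        then have "v \<in> {1}" using i b by simp
        then show False using that by simp
      qed
      then show "i \<in> {1..<N}" using i lH by simp
    qed
    then have "degree H v \<le> card {1..<N}" unfolding degree_def by (intro card_mono) auto
    then show ?thesis using n by simp
  qed
  have "{v \<in> {1..length H}. degree H v = N} = {1}" using d1 dv lH n by fastforce
  then show ?thesis using d1 by (simp add: numDeg_def)
qed

theorem mainTheorem4:
  fixes N :: nat
  assumes "N \<ge> 2"
  shows "(\<forall>k. 1 \<le> k \<and> k \<le> N - 1 \<longrightarrow>
            measure_pmf.expectation (rrh N) (\<lambda>H. real (numDeg k H))
              = real N / (real k * (real k + 1)))
         \<and> (\<forall>H \<in> set_pmf (rrh N). numDeg N H = 1 \<and> degree H 1 = N)"
proof
  obtain n where n: "N = Suc n" using assms by (cases N) auto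
  show "\<forall>k. 1 \<le> k \<and> k \<le> N - 1 \<longrightarrow>
            measure_pmf.expectation (rrh N) (\<lambda>H. real (numDeg k H))
              = real N / (real k * (real k + 1))"
  proof (intro allI impI)
    fix k assume k: "1 \<le> k \<and> k \<le> N - 1"
    then have "k < N" using assms by linarith
    then show "measure_pmf.expectation (rrh N) (\<lambda>H. real (numDeg k H))
              = real N / (real k * (real k + 1))"
      using exp_rrh[of k n] k n by (simp add: F_def)
  qed
  show "\<forall>H \<in> set_pmf (rrh N). numDeg N H = 1 \<and> degree H 1 = N"
    using second_part assms by auto
qed

end
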